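(* Let $\mathrm{X},\mathrm{Y}$ be locally compact Hausdorff spaces, let $F(\mathrm{X})\subset C_0(\mathrm{X})_+$ contain sufficiently many functions to peak on compact $G_\delta$ subsets of $\mathrm{X}$, and let $T:F(\mathrm{X})\to C_0(\mathrm{Y})_+$ satisfy $\|Tf_1+\cdots+Tf_n\|=\|f_1+\cdots+f_n\|$ for all $n\in\mathbb{N}$ and $f_1,\dots,f_n\in F(\mathrm{X})$. If $x_1,x_2\in\mathrm{X}$ and $x_1\neq x_2$, then $\operatorname{psupp}_T(x_1)\cap\operatorname{psupp}_T(x_2)=\emptyset$.
   Context: $C_0(\mathrm{X})_+$: nonnegative continuous functions vanishing at infinity, sup-norm. $\operatorname{pk}(f)=\{x: f(x)=\|f\|\}$. $F(\mathrm{X})$ "contains sufficiently many functions to peak on compact $G_\delta$ subsets" if every nonempty compact $G_\delta$ set $K\subset\mathrm{X}$ equals $\operatorname{pk}(f)$ for some $f\in F(\mathrm{X})$. For $x\in\mathrm{X}$: $\operatorname{PKat}(x)=\{g\in F(\mathrm{X}): g(x)=\|g\|\}$ and $\operatorname{psupp}_T(x)=\bigcap_{h\in\operatorname{PKat}(x)}\operatorname{pk}(Th)\subset\mathrm{Y}$. *)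

theory Defs
  imports "HOL-Analysis.Analysis"
begin

definition supnorm :: "'a topology \<Rightarrow> ('a \<Rightarrow> real) \<Rightarrow> real" where
  "supnorm X f = Sup (insert 0 (f ` topspace X))"

definition C0plus :: "'a topology \<Rightarrow> ('a \<Rightarrow> real) set" where
  "C0plus X = {f. continuous_map X euclideanreal f \<and> (\<forall>x\<in>topspace X. f x \<ge> 0) \<and>
                  (\<forall>e>0. compactin X {x \<in> topspace X. f x \<ge> e})}"

definition pk :: "'a topology \<Rightarrow> ('a \<Rightarrow> real) \<Rightarrow> 'a set" where
  "pk X f = {x \<in> topspace X. f x = supnorm X f}"

definition gdelta_in :: "'a topology \<Rightarrow> 'a set \<Rightarrow> bool" where
  "gdelta_in X K \<longleftrightarrow> (\<exists>U :: nat \<Rightarrow> 'a set. (\<forall>n. openin X (U n)) \<and> K = \<Inter> (range U))"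

definition peaks_on_compact_gdelta :: "'a topology \<Rightarrow> ('a \<Rightarrow> real) set \<Rightarrow> bool" where
  "peaks_on_compact_gdelta X F \<longleftrightarrow>
     (\<forall>K. K \<noteq> {} \<and> compactin X K \<and> gdelta_in X K \<longrightarrow> (\<exists>f\<in>F. K = pk X f))"

definition PKat :: "'a topology \<Rightarrow> ('a \<Rightarrow> real) set \<Rightarrow> 'a \<Rightarrow> ('a \<Rightarrow> real) set" where
  "PKat X F x = {g \<in> F. g x = supnorm X g}"

definition psupp :: "'a topology \<Rightarrow> ('a \<Rightarrow> real) set \<Rightarrow> 'b topology
                     \<Rightarrow> (('a \<Rightarrow> real) \<Rightarrow> ('b \<Rightarrow> real)) \<Rightarrow> 'a \<Rightarrow> 'b set" where
  "psupp X F Y T x = {y \<in> topspace Y. \<forall>h \<in> PKat X F x. y \<in> pk Y (T h)}"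

end

theory Submission
  imports Defs
begin

lemma gdelta_nbhd:
  assumes lc: "locally_compact_space X" and H: "Hausdorff_space X"
    and W: "openin X W" and xW: "x \<in> W"
  shows "\<exists>K. x \<in> K \<and> K \<subseteq> W \<and> compactin X K \<and> gdelta_in X K"
proof -
  have reg: "regular_space X" using lc H locally_compact_Hausdorff_imp_regular_space by blast
  have "neighbourhood_base_of (\<lambda>C. compactin X C \<and> closedin X C) X"
    using lc reg locally_compact_regular_space_neighbourhood_base by blast
  then obtain U C where U: "openin X U" "compactin X C" "closedin X C" "x \<in> U" "U \<subseteq> C" "C \<subseteq> W"
    using W xW unfolding neighbourhood_base_of by blast
  have cr: "completely_regular_space X"
    using lc H locally_compact_regular_imp_completely_regular_space by blast
  have xt: "x \<in> topspace X" using U openin_subset by blast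
  have "closedin X (topspace X - U)" using U by blast
  then obtain f :: "'a \<Rightarrow> real" where f: "continuous_map X (top_of_set {0..1}) f" "f x = 0"
      "f ` (topspace X - U) \<subseteq> {1}"
    using cr xt U(4) unfolding completely_regular_space_def by blast
  have fc: "continuous_map X euclideanreal f" using f(1) continuous_map_in_subtopology by blast
  have f01: "\<And>z. z \<in> topspace X \<Longrightarrow> f z \<in> {0..1}"
    using f(1) continuous_map_image_subset_topspace by fastforce
  define K where "K = {z \<in> topspace X. f z \<in> {0}}"
  have KU: "K \<subseteq> U" using f(3) unfolding K_def by force
  have Kcl: "closedin X K" unfolding K_def by (rule closedin_continuous_map_preimage[OF fc]) simp
  have Kc: "compactin X K" using closed_compactin[OF U(2) _ Kcl] KU U(5) by blast
  define V where "V = (\<lambda>n::nat. {z \<in> topspace X. f z \<in> {..<1 / real (Suc n)}})"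
  have Vo: "\<forall>n. openin X (V n)" unfolding V_def
    by (intro allI openin_continuous_map_preimage[OF fc]) simp
  have "K = \<Inter> (range V)"
  proof
    show "K \<subseteq> \<Inter> (range V)" unfolding K_def V_def by auto
  next
    show "\<Inter> (range V) \<subseteq> K"
    proof
      fix z assume z: "z \<in> \<Inter> (range V)"
      then have zt: "z \<in> topspace X" and lt: "\<And>n. f z < 1 / real (Suc n)" unfolding V_def by auto
      have "f z \<ge> 0" using f01[OF zt] by auto
      moreover have "\<not> f z > 0"
      proof
        assume "f z > 0"
        then obtain n where "inverse (real (Suc n)) < f z" using reals_Archimedean by blast
        with lt[of n] show False by (simp add: field_simps)
      qed
      ultimately show "z \<in> K" unfolding K_def using zt by auto
    qed
  qed
  then have "gdelta_in X K" unfolding gdelta_in_def using Vo by blast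
  moreover have "x \<in> K" unfolding K_def using xt f(2) by simp
  ultimately show ?thesis using Kc KU U by blast
qed

lemma C0plus_le_supnorm:
  assumes "f \<in> C0plus X"
  shows "bdd_above (f ` topspace X)"
proof -
  have c: "continuous_map X euclideanreal f" and cp: "compactin X {x \<in> topspace X. f x \<ge> 1}"
    using assms unfolding C0plus_def by auto
  have "compact (f ` {x \<in> topspace X. f x \<ge> 1})"
    using image_compactin[OF cp c] by simp
  then obtain B where B: "\<forall>v \<in> f ` {x \<in> topspace X. f x \<ge> 1}. v \<le> B"
    using compact_imp_bounded bounded_imp_bdd_above unfolding bdd_above_def by blast
  have "\<forall>x\<in>topspace X. f x \<le> max 1 B"
  proof
    fix x assume "x \<in> topspace X"
    then show "f x \<le> max 1 B" using B by (cases "f x \<ge> 1") auto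
  qed
  then show ?thesis unfolding bdd_above_def by blast
qed

lemma le_supnorm:
  assumes "bdd_above (f ` topspace X)" "x \<in> topspace X"
  shows "f x \<le> supnorm X f"
  unfolding supnorm_def using assms by (intro cSup_upper) auto


theorem mainTheorem16:
  fixes X :: "'a topology" and Y :: "'b topology"
    and F :: "('a \<Rightarrow> real) set" and T :: "('a \<Rightarrow> real) \<Rightarrow> ('b \<Rightarrow> real)"
  assumes "locally_compact_space X" and "Hausdorff_space X"
    and "locally_compact_space Y" and "Hausdorff_space Y"
    and "F \<subseteq> C0plus X"
    and "peaks_on_compact_gdelta X F"
    and "\<forall>f\<in>F. T f \<in> C0plus Y"
    and "\<And>n (fs :: nat \<Rightarrow> 'a \<Rightarrow> real). (\<forall>i<n. fs i \<in> F) \<Longrightarrow>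
           supnorm Y (\<lambda>y. \<Sum>i<n. T (fs i) y) = supnorm X (\<lambda>x. \<Sum>i<n. fs i x)"
    and "x1 \<in> topspace X" and "x2 \<in> topspace X" and "x1 \<noteq> x2"
  shows "psupp X F Y T x1 \<inter> psupp X F Y T x2 = {}"
proof (rule ccontr)
  assume "psupp X F Y T x1 \<inter> psupp X F Y T x2 \<noteq> {}"
  then obtain y where y1: "y \<in> psupp X F Y T x1" and y2: "y \<in> psupp X F Y T x2" by blast
  obtain V1 V2 where V: "openin X V1" "openin X V2" "x1 \<in> V1" "x2 \<in> V2" "disjnt V1 V2"
    using assms(2,9,10,11) unfolding Hausdorff_space_def by blast
  obtain K1 where K1: "x1 \<in> K1" "K1 \<subseteq> V1" "compactin X K1" "gdelta_in X K1"
    using gdelta_nbhd[OF assms(1,2) V(1,3)] by blast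
  obtain K2 where K2: "x2 \<in> K2" "K2 \<subseteq> V2" "compactin X K2" "gdelta_in X K2"
    using gdelta_nbhd[OF assms(1,2) V(2,4)] by blast
  obtain f1 where f1: "f1 \<in> F" "K1 = pk X f1"
    using assms(6) K1 unfolding peaks_on_compact_gdelta_def by blast
  obtain f2 where f2: "f2 \<in> F" "K2 = pk X f2"
    using assms(6) K2 unfolding peaks_on_compact_gdelta_def by blast
  have disj: "\<And>z. z \<in> pk X f1 \<Longrightarrow> z \<in> pk X f2 \<Longrightarrow> False"
    using K1 K2 V(5) f1 f2 unfolding disjnt_def by blast
  define M1 where "M1 = supnorm X f1"
  define M2 where "M2 = supnorm X f2"
  have C1: "f1 \<in> C0plus X" and C2: "f2 \<in> C0plus X" using f1 f2 assms(5) by auto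
  have b1: "bdd_above (f1 ` topspace X)" and b2: "bdd_above (f2 ` topspace X)"
    using C0plus_le_supnorm[OF C1] C0plus_le_supnorm[OF C2] by auto
  have le1: "\<And>z. z \<in> topspace X \<Longrightarrow> f1 z \<le> M1" unfolding M1_def using le_supnorm[OF b1] by blast
  have le2: "\<And>z. z \<in> topspace X \<Longrightarrow> f2 z \<le> M2" unfolding M2_def using le_supnorm[OF b2] by blast
  have nn1: "\<And>z. z \<in> topspace X \<Longrightarrow> f1 z \<ge> 0" and nn2: "\<And>z. z \<in> topspace X \<Longrightarrow> f2 z \<ge> 0"
    using C1 C2 unfolding C0plus_def by auto
  have cf1: "continuous_map X euclideanreal f1" and cf2: "continuous_map X euclideanreal f2"
    using C1 C2 unfolding C0plus_def by auto
  have p1: "f1 x1 = M1" using K1(1) f1(2) unfolding pk_def M1_def by auto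
  have p2: "f2 x2 = M2" using K2(1) f2(2) unfolding pk_def M2_def by auto
  have "f1 x2 \<noteq> M1"
  proof
    assume "f1 x2 = M1"
    then have "x2 \<in> pk X f1" using assms(10) unfolding pk_def M1_def by auto
    moreover have "x2 \<in> pk X f2" using K2(1) f2(2) by blast
    ultimately show False using disj by blast
  qed
  then have M1p: "M1 > 0" using le1[OF assms(10)] nn1[OF assms(10)] by linarith
  have "f2 x1 \<noteq> M2"
  proof
    assume "f2 x1 = M2"
    then have "x1 \<in> pk X f2" using assms(9) unfolding pk_def M2_def by auto
    moreover have "x1 \<in> pk X f1" using K1(1) f1(2) by blast
    ultimately show False using disj by blast
  qed
  then have M2p: "M2 > 0" using le2[OF assms(9)] nn2[OF assms(9)] by linarith
  define g where "g = (\<lambda>x. f1 x + f2 x)"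
  define c where "c = min M1 M2"
  have cp: "c > 0" using M1p M2p unfolding c_def by auto
  define C where "C = {x \<in> topspace X. g x \<in> {c..}}"
  have gc: "continuous_map X euclideanreal g" unfolding g_def using cf1 cf2 by (intro continuous_map_add) auto
  have Ccl: "closedin X C" unfolding C_def by (rule closedin_continuous_map_preimage[OF gc]) simp
  have E1: "\<forall>e>0. compactin X {x \<in> topspace X. f1 x \<ge> e}" using C1 unfolding C0plus_def by blast
  have E2: "\<forall>e>0. compactin X {x \<in> topspace X. f2 x \<ge> e}" using C2 unfolding C0plus_def by blast
  have c2: "c/2 > 0" using cp by simp
  have A1: "compactin X {x \<in> topspace X. f1 x \<ge> c/2}" using E1 c2 by blast
  have A2: "compactin X {x \<in> topspace X. f2 x \<ge> c/2}" using E2 c2 by blast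
  have "C \<subseteq> {x \<in> topspace X. f1 x \<ge> c/2} \<union> {x \<in> topspace X. f2 x \<ge> c/2}"
    unfolding C_def g_def by auto
  then have Cc: "compactin X C" using closed_compactin[OF compactin_Un[OF A1 A2] _ Ccl] by blast
  have "compact (g ` C)" using image_compactin[OF Cc gc] by simp
  moreover have "x1 \<in> C" unfolding C_def g_def c_def using assms(9) p1 nn2[OF assms(9)] by auto
  ultimately obtain v where v: "v \<in> g ` C" "\<forall>w\<in>g ` C. w \<le> v"
    using compact_attains_sup[of "g ` C"] by blast
  then obtain x0 where x0: "x0 \<in> C" "v = g x0" by blast
  have x0t: "x0 \<in> topspace X" using x0 unfolding C_def by auto
  have "v < M1 + M2"
  proof -
    have "\<not> (f1 x0 = M1 \<and> f2 x0 = M2)"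
      using disj x0t unfolding pk_def M1_def M2_def by auto
    then show ?thesis using x0 le1[OF x0t] le2[OF x0t] unfolding g_def by linarith
  qed
  define m where "m = max v c"
  have mlt: "m < M1 + M2" unfolding m_def c_def using \<open>v < M1 + M2\<close> M1p M2p by auto
  have gle: "\<And>x. x \<in> topspace X \<Longrightarrow> g x \<le> m"
  proof -
    fix x assume xt: "x \<in> topspace X"
    show "g x \<le> m"
    proof (cases "g x \<ge> c")
      case True
      then have "x \<in> C" unfolding C_def using xt by auto
      then show ?thesis using v unfolding m_def by auto
    qed (auto simp: m_def)
  qed
  have supX: "supnorm X g \<le> m"
    unfolding supnorm_def using gle cp unfolding m_def
    by (intro cSup_least) auto
  define fs where "fs = (\<lambda>i::nat. if i = 0 then f1 else f2)"
  have "supnorm Y (\<lambda>y. \<Sum>i<2. T (fs i) y) = supnorm X (\<lambda>x. \<Sum>i<2. fs i x)"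
    using assms(8)[of 2 fs] f1 f2 unfolding fs_def by auto
  moreover have "(\<lambda>y. \<Sum>i<2. T (fs i) y) = (\<lambda>y. T f1 y + T f2 y)"
    unfolding fs_def by (simp add: numeral_2_eq_2)
  moreover have "(\<lambda>x. \<Sum>i<2. fs i x) = g"
    unfolding fs_def g_def by (simp add: numeral_2_eq_2)
  ultimately have eq2: "supnorm Y (\<lambda>y. T f1 y + T f2 y) = supnorm X g" by simp
  have eqa: "supnorm Y (T f1) = M1"
    using assms(8)[of 1 "\<lambda>i. f1"] f1 unfolding M1_def by simp
  have eqb: "supnorm Y (T f2) = M2"
    using assms(8)[of 1 "\<lambda>i. f2"] f2 unfolding M2_def by simp
  have f1P: "f1 \<in> PKat X F x1" unfolding PKat_def using f1 p1 M1_def by auto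
  have f2P: "f2 \<in> PKat X F x2" unfolding PKat_def using f2 p2 M2_def by auto
  have yt: "y \<in> topspace Y" and ya: "y \<in> pk Y (T f1)" and yb: "y \<in> pk Y (T f2)"
    using y1 y2 f1P f2P unfolding psupp_def by auto
  have ta: "T f1 y = M1" using ya eqa unfolding pk_def by auto
  have tb: "T f2 y = M2" using yb eqb unfolding pk_def by auto
  have bt1: "bdd_above (T f1 ` topspace Y)" using C0plus_le_supnorm assms(7) f1(1) by metis
  have bt2: "bdd_above (T f2 ` topspace Y)" using C0plus_le_supnorm assms(7) f2(1) by metis
  obtain B1 where B1: "\<forall>z\<in>topspace Y. T f1 z \<le> B1" using bt1 unfolding bdd_above_def by auto
  obtain B2 where B2: "\<forall>z\<in>topspace Y. T f2 z \<le> B2" using bt2 unfolding bdd_above_def by auto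
  have "bdd_above ((\<lambda>y. T f1 y + T f2 y) ` topspace Y)"
    unfolding bdd_above_def using B1 B2 by (intro exI[of _ "B1 + B2"]) (auto intro: add_mono)
  then have "T f1 y + T f2 y \<le> supnorm Y (\<lambda>y. T f1 y + T f2 y)"
    using le_supnorm[of "\<lambda>y. T f1 y + T f2 y" Y y] yt by simp
  then show False using ta tb eq2 supX mlt by linarith
qed

end
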